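(* Let $G$ be a graph with $n$ vertices and at least one edge, and let $\Delta$ be its maximum vertex degree. Then $$EE(G) > e^{\sqrt{\Delta}} + (n-1) - \sqrt{\Delta}.$$
   Context: All graphs are finite, simple and undirected. For a graph $G$ with adjacency matrix $A(G)$ having eigenvalues $\lambda_1\ge\cdots\ge\lambda_n$, the Estrada index is $EE(G)=\sum_{i=1}^n e^{\lambda_i}$. *)

theory Defs
  imports "Jordan_Normal_Form.Char_Poly" "HOL-Computational_Algebra.Polynomial"
begin

text \<open>A finite simple graph on the vertex set {0..<n}, given by an edge relation E
  that is symmetric and irreflexive (only its restriction to {0..<n} matters).\<close>
definition simple_graph :: "nat \<Rightarrow> (nat \<Rightarrow> nat \<Rightarrow> bool) \<Rightarrow> bool" where
  "simple_graph n E \<longleftrightarrow> (\<forall>i<n. \<forall>j<n. E i j \<longleftrightarrow> E j i) \<and> (\<forall>i<n. \<not> E i i)"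

definition adj_matrix :: "nat \<Rightarrow> (nat \<Rightarrow> nat \<Rightarrow> bool) \<Rightarrow> real mat" where
  "adj_matrix n E = mat n n (\<lambda>(i, j). if E i j then 1 else 0)"

definition degree_of :: "nat \<Rightarrow> (nat \<Rightarrow> nat \<Rightarrow> bool) \<Rightarrow> nat \<Rightarrow> nat" where
  "degree_of n E i = card {j. j < n \<and> E i j}"

definition max_degree :: "nat \<Rightarrow> (nat \<Rightarrow> nat \<Rightarrow> bool) \<Rightarrow> nat" where
  "max_degree n E = Max {degree_of n E i | i. i < n}"

text \<open>Eigenvalues of A(G) with multiplicity = roots (over C) of the characteristic
  polynomial with multiplicity; the Estrada index is the sum of exp over them
  (the sum is real since A(G) is real symmetric; we take the real part).\<close>
definition adj_eigenvalues :: "nat \<Rightarrow> (nat \<Rightarrow> nat \<Rightarrow> bool) \<Rightarrow> complex multiset" where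
  "adj_eigenvalues n E = proots (char_poly (map_mat complex_of_real (adj_matrix n E)))"

definition estrada_index :: "nat \<Rightarrow> (nat \<Rightarrow> nat \<Rightarrow> bool) \<Rightarrow> real" where
  "estrada_index n E = Re (\<Sum>z\<in>#adj_eigenvalues n E. exp z)"

end

theory Submission
  imports Defs "Jordan_Normal_Form.Schur_Decomposition"
begin

lemma mult_entry:
  assumes "M \<in> carrier_mat n n" "N \<in> carrier_mat n n" "i < n" "j < n"
  shows "(M * N) $$ (i,j) = (\<Sum>k<n. M $$ (i,k) * N $$ (k,j))"
  using assms by (auto simp: scalar_prod_def lessThan_atLeast0 intro!: sum.cong)

definition tr :: "nat \<Rightarrow> 'a::comm_ring_1 mat \<Rightarrow> 'a" where
  "tr n M = (\<Sum>i<n. M $$ (i,i))"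

lemma tr_comm:
  fixes M N :: "'a::comm_ring_1 mat"
  assumes "M \<in> carrier_mat n n" "N \<in> carrier_mat n n"
  shows "tr n (M * N) = tr n (N * M)"
proof -
  have "tr n (M * N) = (\<Sum>i<n. \<Sum>k<n. M $$ (i,k) * N $$ (k,i))"
    unfolding tr_def by (intro sum.cong refl) (simp add: mult_entry[OF assms])
  also have "\<dots> = (\<Sum>k<n. \<Sum>i<n. N $$ (k,i) * M $$ (i,k))"
    by (subst sum.swap) (simp add: mult.commute)
  also have "\<dots> = tr n (N * M)"
    unfolding tr_def by (intro sum.cong refl) (simp add: mult_entry[OF assms(2,1)])
  finally show ?thesis .
qed

lemma upper_pow:
  fixes B :: "'a::comm_ring_1 mat"
  assumes B: "B \<in> carrier_mat n n" "upper_triangular B"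
  shows "upper_triangular (B ^\<^sub>m k) \<and> (\<forall>i<n. (B ^\<^sub>m k) $$ (i,i) = B $$ (i,i) ^ k)"
proof (induction k)
  case 0
  then show ?case using B by auto
next
  case (Suc k)
  have Bk: "B ^\<^sub>m k \<in> carrier_mat n n" using B by simp
  have ut: "\<And>i j. i < n \<Longrightarrow> j < i \<Longrightarrow> (B ^\<^sub>m k) $$ (i,j) = 0"
    using Suc.IH Bk by (auto simp: upper_triangular_def)
  have ub: "\<And>i j. i < n \<Longrightarrow> j < i \<Longrightarrow> B $$ (i,j) = 0"
    using B by (auto simp: upper_triangular_def)
  have 1: "upper_triangular (B ^\<^sub>m Suc k)"
  proof (rule upper_triangularI)
    fix i j assume ij: "j < i" "i < dim_row (B ^\<^sub>m Suc k)"
    hence i: "i < n" using B by simp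
    have "(B ^\<^sub>m Suc k) $$ (i,j) = (\<Sum>l<n. (B ^\<^sub>m k) $$ (i,l) * B $$ (l,j))"
      using mult_entry[OF Bk B(1) i] ij i by simp
    also have "\<dots> = 0"
    proof (intro sum.neutral ballI)
      fix l assume l: "l \<in> {..<n}"
      show "(B ^\<^sub>m k) $$ (i,l) * B $$ (l,j) = 0"
      proof (cases "l < i")
        case True thus ?thesis using ut[OF i True] by simp
      next
        case False thus ?thesis using ub[of l j] l ij by simp
      qed
    qed
    finally show "(B ^\<^sub>m Suc k) $$ (i,j) = 0" .
  qed
  have 2: "(B ^\<^sub>m Suc k) $$ (i,i) = B $$ (i,i) ^ Suc k" if i: "i < n" for i
  proof -
    have "(B ^\<^sub>m Suc k) $$ (i,i) = (\<Sum>l<n. (B ^\<^sub>m k) $$ (i,l) * B $$ (l,i))"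
      using mult_entry[OF Bk B(1) i i] by simp
    also have "\<dots> = (B ^\<^sub>m k) $$ (i,i) * B $$ (i,i)"
    proof -
      have "(\<Sum>l<n. (B ^\<^sub>m k) $$ (i,l) * B $$ (l,i)) = (\<Sum>l<n. if l = i then (B ^\<^sub>m k) $$ (i,i) * B $$ (i,i) else 0)"
      proof (intro sum.cong refl)
        fix l assume l: "l \<in> {..<n}"
        show "(B ^\<^sub>m k) $$ (i,l) * B $$ (l,i) = (if l = i then (B ^\<^sub>m k) $$ (i,i) * B $$ (i,i) else 0)"
          using ut[OF i, of l] ub[of l i] l by (cases "l < i"; cases "l = i") auto
      qed
      thus ?thesis using i by simp
    qed
    also have "\<dots> = B $$ (i,i) ^ Suc k" using Suc.IH i by simp
    finally show ?thesis .
  qed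
  show ?case using 1 2 by blast
qed
lemma tr_pow_roots:
  fixes A :: "complex mat"
  assumes A: "A \<in> carrier_mat n n" and cp: "char_poly A = (\<Prod>a\<leftarrow>as. [:-a,1:])"
  shows "tr n (A ^\<^sub>m k) = (\<Sum>i<n. (as!i)^k)"
proof -
  obtain B P Q where sd: "schur_decomposition A as = (B,P,Q)"
    by (cases "schur_decomposition A as") auto
  from schur_decomposition[OF A cp sd] have sim: "similar_mat_wit A B P Q"
    and ut: "upper_triangular B" and dg: "diag_mat B = as" by auto
  note W = similar_mat_witD2[OF A sim]
  have Bk: "B ^\<^sub>m k \<in> carrier_mat n n" using W by simp
  have "A ^\<^sub>m k = P * B ^\<^sub>m k * Q" using similar_mat_wit_pow_id[OF sim] .
  hence "tr n (A ^\<^sub>m k) = tr n (Q * (P * B ^\<^sub>m k))"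
    using tr_comm[of "P * B ^\<^sub>m k" n Q] W Bk by simp
  also have "Q * (P * B ^\<^sub>m k) = (Q * P) * B ^\<^sub>m k"
    by (rule assoc_mult_mat[symmetric, of Q n n P n "B ^\<^sub>m k" n]) (use W Bk in auto)
  also have "\<dots> = B ^\<^sub>m k" using W Bk by simp
  also have "tr n (B ^\<^sub>m k) = (\<Sum>i<n. B $$ (i,i) ^ k)"
    unfolding tr_def using upper_pow[OF W(5) ut, of k] by simp
  also have "\<dots> = (\<Sum>i<n. (as!i)^k)"
  proof (intro sum.cong refl)
    fix i assume "i \<in> {..<n}"
    thus "B $$ (i,i) ^ k = (as!i)^k" using W(5) by (simp add: dg[symmetric] diag_mat_def)
  qed
  finally show ?thesis .
qed

lemma adj_carrier: "adj_matrix n E \<in> carrier_mat n n"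
  unfolding adj_matrix_def by simp

lemma estrada_series:
  "(\<lambda>k. tr n (adj_matrix n E ^\<^sub>m k) / fact k) sums estrada_index n E"
proof -
  define A where "A = adj_matrix n E"
  define Ac where "Ac = map_mat complex_of_real A"
  have A: "A \<in> carrier_mat n n" unfolding A_def by (rule adj_carrier)
  have Ac: "Ac \<in> carrier_mat n n" unfolding Ac_def using A by simp
  obtain as where cp: "char_poly Ac = (\<Prod>a\<leftarrow>as. [:-a,1:])" and len: "length as = n"
    using char_poly_factorized[OF Ac] by blast
  have "proots (\<Prod>a\<leftarrow>as. [:-a,1:]) = mset as"
  proof (induction as)
    case Nil then show ?case by simp
  next
    case (Cons a as)
    have "proots (\<Prod>a\<leftarrow>a # as. [:-a,1:]) = proots ([:-a,1:] * (\<Prod>a\<leftarrow>as. [:-a,1:]))" by simp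
    also have "\<dots> = proots [:-a,1:] + proots (\<Prod>a\<leftarrow>as. [:-a,1:])"
      by (rule proots_mult) (auto simp: prod_list_zero_iff)
    finally show ?case using Cons by simp
  qed
  hence ev: "adj_eigenvalues n E = mset as"
    unfolding adj_eigenvalues_def A_def[symmetric] Ac_def[symmetric] cp .
  have "(\<Sum>z\<in>#adj_eigenvalues n E. exp z) = (\<Sum>i<n. exp (as!i))"
    unfolding ev by (simp add: mset_map[symmetric] sum_mset_sum_list sum_list_sum_nth len lessThan_atLeast0 del: mset_map)
  moreover have "(\<lambda>k. \<Sum>i<n. (as!i)^k /\<^sub>R fact k) sums (\<Sum>i<n. exp (as!i))"
    by (rule sums_sum) (rule exp_converges)
  moreover have "(\<Sum>i<n. (as!i)^k /\<^sub>R fact k) = complex_of_real (tr n (A ^\<^sub>m k) / fact k)" for k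
  proof -
    have "(\<Sum>i<n. (as!i)^k /\<^sub>R fact k) = (\<Sum>i<n. (as!i)^k) /\<^sub>R fact k"
      by (simp add: scaleR_sum_right)
    also have "(\<Sum>i<n. (as!i)^k) = tr n (Ac ^\<^sub>m k)" using tr_pow_roots[OF Ac cp] by simp
    also have "Ac ^\<^sub>m k = map_mat complex_of_real (A ^\<^sub>m k)"
      unfolding Ac_def using of_real_hom.mat_hom_pow[OF A, of k] by metis
    also have "tr n (map_mat complex_of_real (A ^\<^sub>m k)) = complex_of_real (tr n (A ^\<^sub>m k))"
      unfolding tr_def using A by simp
    finally show ?thesis by (simp add: scaleR_conv_of_real divide_inverse mult.commute)
  qed
  ultimately have "(\<lambda>k. complex_of_real (tr n (A ^\<^sub>m k) / fact k)) sums (\<Sum>z\<in>#adj_eigenvalues n E. exp z)"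
    by simp
  from sums_Re[OF this] have "(\<lambda>k. Re (complex_of_real (tr n (A ^\<^sub>m k) / fact k))) sums estrada_index n E"
    unfolding estrada_index_def by (simp only: A_def)
  thus ?thesis unfolding A_def by (simp only: Re_complex_of_real)
qed

lemma adj_entry: "i < n \<Longrightarrow> j < n \<Longrightarrow> adj_matrix n E $$ (i,j) = (if E i j then 1 else 0)"
  unfolding adj_matrix_def by simp

lemma adj_pow_nonneg: "i < n \<Longrightarrow> j < n \<Longrightarrow> (adj_matrix n E ^\<^sub>m k) $$ (i,j) \<ge> 0"
proof (induction k arbitrary: i j)
  case 0 then show ?case using adj_carrier[of n E] by (simp add: one_mat_def)
next
  case (Suc k)
  have "(adj_matrix n E ^\<^sub>m Suc k) $$ (i,j) = (\<Sum>l<n. (adj_matrix n E ^\<^sub>m k) $$ (i,l) * adj_matrix n E $$ (l,j))"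
    using mult_entry[of "adj_matrix n E ^\<^sub>m k" n "adj_matrix n E" i j] Suc.prems adj_carrier by simp
  also have "\<dots> \<ge> 0" using Suc by (intro sum_nonneg) (auto simp: adj_entry)
  finally show ?case .
qed

lemma mult_ge:
  fixes M N :: "real mat"
  assumes "M \<in> carrier_mat n n" "N \<in> carrier_mat n n" "i < n" "j < n" "l < n"
    and "\<And>a b. a < n \<Longrightarrow> b < n \<Longrightarrow> M $$ (a,b) \<ge> 0"
    and "\<And>a b. a < n \<Longrightarrow> b < n \<Longrightarrow> N $$ (a,b) \<ge> 0"
  shows "(M * N) $$ (i,j) \<ge> M $$ (i,l) * N $$ (l,j)"
proof -
  have "M $$ (i,l) * N $$ (l,j) \<le> (\<Sum>k<n. M $$ (i,k) * N $$ (k,j))"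
    by (rule member_le_sum[where f = "\<lambda>k. M $$ (i,k) * N $$ (k,j)"]) (use assms in auto)
  thus ?thesis using mult_entry[OF assms(1-4)] by simp
qed

lemma pow_Suc_left:
  fixes A :: "'a::semiring_1 mat"
  assumes "A \<in> carrier_mat n n"
  shows "A ^\<^sub>m Suc k = A * A ^\<^sub>m k"
proof (induction k)
  case 0 then show ?case using assms by simp
next
  case (Suc k)
  have "A ^\<^sub>m Suc (Suc k) = (A * A ^\<^sub>m k) * A" using Suc by simp
  also have "\<dots> = A * (A ^\<^sub>m k * A)"
    by (rule assoc_mult_mat[of _ n n _ n _ n]) (use assms in auto)
  finally show ?case by simp
qed

lemma diag_lower:
  assumes G: "simple_graph n E" and v: "v < n"
  shows "(adj_matrix n E ^\<^sub>m (2*j)) $$ (v,v) \<ge> real (card {w. w<n \<and> E v w}) ^ j"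
proof (induction j)
  case 0 then show ?case using v adj_carrier[of n E] by simp
next
  case (Suc j)
  define A where "A = adj_matrix n E"
  define M where "M = A ^\<^sub>m (2*j)"
  define NB where "NB = {w. w<n \<and> E v w}"
  have A: "A \<in> carrier_mat n n" unfolding A_def by (rule adj_carrier)
  have M: "M \<in> carrier_mat n n" unfolding M_def using A by simp
  have MA: "M * A \<in> carrier_mat n n" using M A by simp
  have eq: "A ^\<^sub>m (2 * Suc j) = M * A * A" unfolding M_def by simp
  have MAeq: "M * A = A ^\<^sub>m Suc (2*j)" unfolding M_def by simp
  have nnA: "\<And>a b. a < n \<Longrightarrow> b < n \<Longrightarrow> A $$ (a,b) \<ge> 0" unfolding A_def by (simp add: adj_entry)
  have nnM: "\<And>a b. a < n \<Longrightarrow> b < n \<Longrightarrow> M $$ (a,b) \<ge> 0" unfolding M_def A_def by (rule adj_pow_nonneg)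
  have nnMA: "\<And>a b. a < n \<Longrightarrow> b < n \<Longrightarrow> (M * A) $$ (a,b) \<ge> 0" unfolding MAeq by (unfold A_def) (rule adj_pow_nonneg)
  have NB: "NB \<subseteq> {..<n}" "finite NB" unfolding NB_def by auto
  have sym: "\<And>l. l \<in> NB \<Longrightarrow> A $$ (l,v) = 1 \<and> A $$ (v,l) = 1"
    using G v unfolding NB_def A_def simple_graph_def by (auto simp: adj_entry)
  have "real (card NB) * real (card NB) ^ j \<le> real (card NB) * M $$ (v,v)"
    using Suc.IH unfolding M_def A_def NB_def by (intro mult_left_mono) auto
  also have "\<dots> = (\<Sum>l\<in>NB. M $$ (v,v) * A $$ (v,l))"
    using sym by simp
  also have "\<dots> \<le> (\<Sum>l\<in>NB. (M * A) $$ (v,l))"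
    by (rule sum_mono, rule mult_ge[OF M A v]) (use NB nnA nnM v in auto)
  also have "\<dots> = (\<Sum>l\<in>NB. (M * A) $$ (v,l) * A $$ (l,v))"
    using sym by simp
  also have "\<dots> \<le> (\<Sum>l<n. (M * A) $$ (v,l) * A $$ (l,v))"
    by (rule sum_mono2) (use NB nnA nnMA v in auto)
  also have "\<dots> = (M * A * A) $$ (v,v)"
    by (rule mult_entry[OF MA A v v, symmetric])
  finally show ?case unfolding eq[unfolded A_def] NB_def A_def M_def by simp
qed

lemma nbr_lower:
  assumes G: "simple_graph n E" and v: "v < n" and w: "w < n" "E v w"
  shows "(adj_matrix n E ^\<^sub>m (Suc (Suc m))) $$ (w,w) \<ge> (adj_matrix n E ^\<^sub>m m) $$ (v,v)"
proof -
  define A where "A = adj_matrix n E"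
  define M where "M = A ^\<^sub>m m"
  have A: "A \<in> carrier_mat n n" unfolding A_def by (rule adj_carrier)
  have M: "M \<in> carrier_mat n n" unfolding M_def using A by simp
  have AM: "A * M \<in> carrier_mat n n" using M A by simp
  have eq: "A ^\<^sub>m Suc (Suc m) = (A * M) * A" unfolding M_def using pow_Suc_left[OF A, of m] by simp
  have AMeq: "A * M = A ^\<^sub>m Suc m" unfolding M_def using pow_Suc_left[OF A, of m] by simp
  have nnA: "\<And>a b. a < n \<Longrightarrow> b < n \<Longrightarrow> A $$ (a,b) \<ge> 0" unfolding A_def by (simp add: adj_entry)
  have nnM: "\<And>a b. a < n \<Longrightarrow> b < n \<Longrightarrow> M $$ (a,b) \<ge> 0" unfolding M_def A_def by (rule adj_pow_nonneg)
  have nnAM: "\<And>a b. a < n \<Longrightarrow> b < n \<Longrightarrow> (A * M) $$ (a,b) \<ge> 0" unfolding AMeq by (unfold A_def) (rule adj_pow_nonneg)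
  have e: "A $$ (w,v) = 1" "A $$ (v,w) = 1"
    using G v w unfolding A_def simple_graph_def by (auto simp: adj_entry)
  have "((A * M) * A) $$ (w,w) \<ge> (A * M) $$ (w,v) * A $$ (v,w)"
    by (rule mult_ge[OF AM A w(1) w(1) v]) (use nnA nnAM in auto)
  moreover have "(A * M) $$ (w,v) \<ge> A $$ (w,v) * M $$ (v,v)"
    by (rule mult_ge[OF A M w(1) v v]) (use nnA nnM in auto)
  ultimately show ?thesis using e unfolding eq[unfolded A_def] by (simp add: A_def M_def)
qed

lemma exp_neg_strict:
  fixes x :: real assumes "x > 0" shows "1 - x < exp (-x)"
proof (cases "x \<ge> 1")
  case True then show ?thesis using exp_gt_zero[of "-x"] by linarith
next
  case False
  have "1 - x/2 \<le> exp (-x/2)" using exp_ge_add_one_self[of "-x/2"] by simp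
  moreover have "0 \<le> 1 - x/2" using False by simp
  ultimately have "(1 - x/2)^2 \<le> exp (-x/2)^2" by (rule power_mono)
  also have "exp (-x/2)^2 = exp (-x)" by (simp add: power2_eq_square exp_add[symmetric])
  finally have "(1 - x/2)^2 \<le> exp (-x)" .
  moreover have "1 - x < (1 - x/2)^2" using assms by (simp add: power2_eq_square field_simps)
  ultimately show ?thesis by linarith
qed

lemma trace_even_lower:
  assumes G: "simple_graph n E" and v: "v < n"
  shows "tr n (adj_matrix n E ^\<^sub>m (2 * Suc m)) \<ge> 2 * real (card {w. w<n \<and> E v w}) ^ Suc m"
proof -
  define A where "A = adj_matrix n E"
  define NB where "NB = {w. w<n \<and> E v w}"
  define d where "d = real (card NB)"
  have NB: "NB \<subseteq> {..<n}" "finite NB" unfolding NB_def by auto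
  have vNB: "v \<notin> NB" using G v unfolding NB_def simple_graph_def by auto
  have nn: "\<And>i. i < n \<Longrightarrow> (A ^\<^sub>m (2 * Suc m)) $$ (i,i) \<ge> 0"
    unfolding A_def by (rule adj_pow_nonneg)
  have "d ^ Suc m + d * d ^ m \<le> (A ^\<^sub>m (2 * Suc m)) $$ (v,v) + (\<Sum>w\<in>NB. (A ^\<^sub>m (2 * Suc m)) $$ (w,w))"
  proof (rule add_mono)
    show "d ^ Suc m \<le> (A ^\<^sub>m (2 * Suc m)) $$ (v,v)"
      unfolding d_def NB_def A_def by (rule diag_lower[OF G v])
    have "d * d ^ m = (\<Sum>w\<in>NB. d ^ m)" unfolding d_def by simp
    also have "\<dots> \<le> (\<Sum>w\<in>NB. (A ^\<^sub>m (2 * Suc m)) $$ (w,w))"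
    proof (rule sum_mono)
      fix w assume w: "w \<in> NB"
      have "d ^ m \<le> (A ^\<^sub>m (2 * m)) $$ (v,v)"
        unfolding d_def NB_def A_def by (rule diag_lower[OF G v])
      also have "\<dots> \<le> (A ^\<^sub>m (Suc (Suc (2 * m)))) $$ (w,w)"
        unfolding A_def by (rule nbr_lower[OF G v]) (use w NB_def in auto)
      finally show "d ^ m \<le> (A ^\<^sub>m (2 * Suc m)) $$ (w,w)" by simp
    qed
    finally show "d * d ^ m \<le> (\<Sum>w\<in>NB. (A ^\<^sub>m (2 * Suc m)) $$ (w,w))" .
  qed
  also have "\<dots> = (\<Sum>i\<in>insert v NB. (A ^\<^sub>m (2 * Suc m)) $$ (i,i))"
    using vNB NB by simp
  also have "\<dots> \<le> (\<Sum>i<n. (A ^\<^sub>m (2 * Suc m)) $$ (i,i))"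
    by (rule sum_mono2) (use NB v nn in auto)
  finally show ?thesis unfolding tr_def A_def NB_def d_def by simp
qed

lemma tr0: "tr n (adj_matrix n E ^\<^sub>m 0) = real n"
  unfolding tr_def using adj_carrier[of n E] by simp

lemma tr1: assumes G: "simple_graph n E" shows "tr n (adj_matrix n E ^\<^sub>m 1) = 0"
proof -
  have "adj_matrix n E ^\<^sub>m 1 = adj_matrix n E" using adj_carrier[of n E] by simp
  thus ?thesis unfolding tr_def using G by (simp add: adj_entry simple_graph_def)
qed

lemma tr_nonneg: "tr n (adj_matrix n E ^\<^sub>m k) \<ge> 0"
  unfolding tr_def by (intro sum_nonneg) (simp add: adj_pow_nonneg)

theorem mainTheorem2:
  fixes n :: nat and E :: "nat \<Rightarrow> nat \<Rightarrow> bool"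
  assumes "simple_graph n E"
    and "\<exists>i<n. \<exists>j<n. E i j"
  shows "estrada_index n E >
           exp (sqrt (real (max_degree n E))) + (real n - 1) - sqrt (real (max_degree n E))"
proof -
  note G = assms(1)
  obtain i0 j0 where ij: "i0 < n" "j0 < n" "E i0 j0" using assms(2) by blast
  define D where "D = max_degree n E"
  define S where "S = (\<lambda>i. degree_of n E i) ` {..<n}"
  have S: "finite S" "S \<noteq> {}" unfolding S_def using ij by auto
  have "{degree_of n E i |i. i < n} = S" unfolding S_def by auto
  hence DS: "D = Max S" unfolding D_def max_degree_def by simp
  obtain v where v: "v < n" "degree_of n E v = D"
    using Max_in[OF S] unfolding DS S_def by auto
  have "degree_of n E i0 \<ge> 1"
  proof -
    have "{j. j < n \<and> E i0 j} \<noteq> {}" "finite {j. j < n \<and> E i0 j}" using ij by auto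
    hence "card {j. j < n \<and> E i0 j} > 0" by (simp add: card_gt_0_iff)
    thus ?thesis unfolding degree_of_def by simp
  qed
  moreover have "degree_of n E i0 \<le> D" unfolding DS using S ij by (auto simp: S_def)
  ultimately have D1: "D \<ge> 1" by simp
  define x where "x = sqrt (real D)"
  have x0: "x > 0" unfolding x_def using D1 by simp
  define t where "t = (\<lambda>k. tr n (adj_matrix n E ^\<^sub>m k))"
  define l where "l = (\<lambda>k::nat. (x^k + (-x)^k) / fact k + (if k = 0 then real n - 2 else 0))"
  have le: "l k \<le> t k / fact k" for k
  proof (cases k)
    case 0 then show ?thesis unfolding l_def t_def using tr0[of n E] by simp
  next
    case (Suc k')
    have "x^k + (-x)^k \<le> t k"
    proof (cases "even k")
      case True
      then obtain m where m: "k = 2 * Suc m" using Suc by (metis evenE nat.exhaust mult_0_right nat.distinct(1))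
      have "x^k + (-x)^k = 2 * real D ^ Suc m"
        using True x0 unfolding m x_def by (simp add: power_mult)
      also have "\<dots> \<le> t k" unfolding t_def m using trace_even_lower[OF G v(1), of m] v
        by (simp add: degree_of_def)
      finally show ?thesis .
    next
      case False
      then have "x^k + (-x)^k = 0" by simp
      thus ?thesis unfolding t_def using tr_nonneg by simp
    qed
    thus ?thesis unfolding l_def using Suc by (simp add: divide_right_mono)
  qed
  have ser: "(\<lambda>k. t k / fact k) sums estrada_index n E" unfolding t_def by (rule estrada_series)
  have "(\<lambda>k. x^k / fact k) sums exp x" using exp_converges[of x] by (simp add: divide_inverse mult.commute)
  moreover have "(\<lambda>k. (-x)^k / fact k) sums exp (-x)" using exp_converges[of "-x"] by (simp add: divide_inverse mult.commute)
  ultimately have "(\<lambda>k. x^k / fact k + (-x)^k / fact k) sums (exp x + exp (-x))" by (rule sums_add)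
  moreover have "(\<lambda>k::nat. if k = 0 then real n - 2 else 0) sums (real n - 2)"
    using sums_single[of 0 "\<lambda>_. real n - 2"] by simp
  ultimately have "(\<lambda>k. (x^k / fact k + (-x)^k / fact k) + (if k = 0 then real n - 2 else 0)) sums (exp x + exp (-x) + (real n - 2))"
    by (rule sums_add)
  hence lser: "l sums (exp x + exp (-x) + (real n - 2))" unfolding l_def by (simp add: add_divide_distrib)
  have "exp x + exp (-x) + (real n - 2) \<le> estrada_index n E" by (rule sums_le[OF le lser ser])
  moreover have "1 - x < exp (-x)" by (rule exp_neg_strict[OF x0])
  ultimately show ?thesis unfolding D_def[symmetric] x_def[symmetric] by linarith
qed

end
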